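(* Let $\Gamma$ be a Taylor graph with vertex set $X$, let $x\in X$, and let $W$ be an irreducible $T(x)$-module. Then the endpoint of $W$ is either $0$ or $1$.
   Context: A Taylor graph is a distance-regular graph with intersection array $\{k,b,1;1,b,k\}$ where $b<k-1$; it has diameter $3$. Let $A$ be its adjacency matrix, $\partial$ its distance, $V=\mathbb{C}^X$, and for $0\le i\le 3$ let $E^*_i(x)$ be the diagonal matrix with $(E^*_i(x))_{yy}=1$ if $\partial(x,y)=i$ and $0$ otherwise. The Terwilliger algebra $T(x)$ is the subalgebra of $\mathrm{Mat}_X(\mathbb{C})$ generated by $A,E^*_0(x),\dots,E^*_3(x)$. A $T(x)$-module is a subspace $W\subseteq V$ with $BW\subseteq W$ for all $B\in T(x)$; it is irreducible if nonzero with no submodules other than $0,W$. The endpoint of an irreducible $T(x)$-module $W$ is $\min\{i: E^*_i(x)W\neq 0\}$. *)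

theory Defs
  imports Complex_Main
begin

definition simple_graph :: "('a \<Rightarrow> 'a \<Rightarrow> bool) \<Rightarrow> bool" where
  "simple_graph E \<longleftrightarrow> (\<forall>x y. E x y \<longrightarrow> E y x) \<and> (\<forall>x. \<not> E x x)"

definition connected_graph :: "('a \<Rightarrow> 'a \<Rightarrow> bool) \<Rightarrow> bool" where
  "connected_graph E \<longleftrightarrow> (\<forall>x y. \<exists>n. (E ^^ n) x y)"

definition gdist :: "('a \<Rightarrow> 'a \<Rightarrow> bool) \<Rightarrow> 'a \<Rightarrow> 'a \<Rightarrow> nat" where
  "gdist E x y = (LEAST n. (E ^^ n) x y)"

definition distance_regular ::
  "('a::finite \<Rightarrow> 'a \<Rightarrow> bool) \<Rightarrow> nat \<Rightarrow> (nat \<Rightarrow> nat) \<Rightarrow> (nat \<Rightarrow> nat) \<Rightarrow> bool" where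
  "distance_regular E d bs cs \<longleftrightarrow>
     simple_graph E \<and> connected_graph E \<and>
     (\<forall>x y. gdist E x y \<le> d) \<and> (\<exists>x y. gdist E x y = d) \<and>
     (\<forall>x y. \<forall>i. gdist E x y = i \<longrightarrow>
        card {z. E y z \<and> gdist E x z = i + 1} = (if i < d then bs i else 0) \<and>
        card {z. E y z \<and> gdist E x z + 1 = i} = (if 0 < i then cs i else 0))"

text \<open>Taylor graph: intersection array {k,b,1;1,b,k} with b < k - 1.\<close>
definition taylor_graph :: "('a::finite \<Rightarrow> 'a \<Rightarrow> bool) \<Rightarrow> nat \<Rightarrow> nat \<Rightarrow> bool" where
  "taylor_graph E k b \<longleftrightarrow> int b < int k - 1 \<and>
     distance_regular E 3 (\<lambda>i. if i = 0 then k else if i = 1 then b else 1)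
                          (\<lambda>i. if i = 1 then 1 else if i = 2 then b else k)"

type_synonym 'a cmat = "'a \<Rightarrow> 'a \<Rightarrow> complex"
type_synonym 'a cvec = "'a \<Rightarrow> complex"

definition mmult :: "'a::finite cmat \<Rightarrow> 'a cmat \<Rightarrow> 'a cmat" where
  "mmult M N = (\<lambda>i j. \<Sum>l\<in>UNIV. M i l * N l j)"

definition mvec :: "'a::finite cmat \<Rightarrow> 'a cvec \<Rightarrow> 'a cvec" where
  "mvec M v = (\<lambda>i. \<Sum>j\<in>UNIV. M i j * v j)"

definition adj_mat :: "('a \<Rightarrow> 'a \<Rightarrow> bool) \<Rightarrow> 'a cmat" where
  "adj_mat E = (\<lambda>y z. if E y z then 1 else 0)"

definition dual_idem :: "('a \<Rightarrow> 'a \<Rightarrow> bool) \<Rightarrow> 'a \<Rightarrow> nat \<Rightarrow> 'a cmat" where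
  "dual_idem E x i = (\<lambda>y z. if y = z \<and> gdist E x y = i then 1 else 0)"

inductive_set terwilliger :: "('a::finite \<Rightarrow> 'a \<Rightarrow> bool) \<Rightarrow> 'a \<Rightarrow> 'a cmat set"
  for E x where
  gen_A: "adj_mat E \<in> terwilliger E x"
| gen_E: "i \<le> 3 \<Longrightarrow> dual_idem E x i \<in> terwilliger E x"
| one: "(\<lambda>y z. if y = z then 1 else 0) \<in> terwilliger E x"
| add: "M \<in> terwilliger E x \<Longrightarrow> N \<in> terwilliger E x \<Longrightarrow> (\<lambda>i j. M i j + N i j) \<in> terwilliger E x"
| smult: "M \<in> terwilliger E x \<Longrightarrow> (\<lambda>i j. c * M i j) \<in> terwilliger E x"
| mult: "M \<in> terwilliger E x \<Longrightarrow> N \<in> terwilliger E x \<Longrightarrow> mmult M N \<in> terwilliger E x"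

definition csubspace_fun :: "'a cvec set \<Rightarrow> bool" where
  "csubspace_fun W \<longleftrightarrow> (\<lambda>_. 0) \<in> W \<and>
     (\<forall>u\<in>W. \<forall>v\<in>W. (\<lambda>i. u i + v i) \<in> W) \<and>
     (\<forall>c. \<forall>u\<in>W. (\<lambda>i. c * u i) \<in> W)"

definition T_module :: "('a::finite \<Rightarrow> 'a \<Rightarrow> bool) \<Rightarrow> 'a \<Rightarrow> 'a cvec set \<Rightarrow> bool" where
  "T_module E x W \<longleftrightarrow> csubspace_fun W \<and>
     (\<forall>B\<in>terwilliger E x. \<forall>v\<in>W. mvec B v \<in> W)"

definition irreducible_T_module :: "('a::finite \<Rightarrow> 'a \<Rightarrow> bool) \<Rightarrow> 'a \<Rightarrow> 'a cvec set \<Rightarrow> bool" where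
  "irreducible_T_module E x W \<longleftrightarrow> T_module E x W \<and> W \<noteq> {\<lambda>_. 0} \<and>
     (\<forall>U. T_module E x U \<and> U \<subseteq> W \<longrightarrow> U = {\<lambda>_. 0} \<or> U = W)"

definition endpoint :: "('a::finite \<Rightarrow> 'a \<Rightarrow> bool) \<Rightarrow> 'a \<Rightarrow> 'a cvec set \<Rightarrow> nat" where
  "endpoint E x W = (LEAST i. \<exists>v\<in>W. mvec (dual_idem E x i) v \<noteq> (\<lambda>_. 0))"

end

theory Submission
  imports Defs
begin

lemma mvec_adj: "mvec (adj_mat E) v y = (\<Sum>z\<in>UNIV. if E y z then v z else 0)"
  unfolding mvec_def adj_mat_def by (rule sum.cong) auto

lemma mvec_dual: "mvec (dual_idem E x i) v y = (if gdist E x y = i then v y else 0)"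
proof -
  have "mvec (dual_idem E x i) v y = (\<Sum>j\<in>UNIV. if j = y then (if gdist E x y = i then v y else 0) else 0)"
    unfolding mvec_def dual_idem_def by (rule sum.cong) auto
  then show ?thesis by simp
qed

lemma sum_const_if: "(\<Sum>s\<in>(UNIV::'a::finite set). if P s then (c::complex) else 0) = of_nat (card {s. P s}) * c"
  by (simp add: sum.If_cases)


locale tay =
  fixes E :: "'a::finite \<Rightarrow> 'a \<Rightarrow> bool" and k b :: nat
  assumes tg: "taylor_graph E k b"
begin

lemma bk: "b + 1 < k" using tg unfolding taylor_graph_def by linarith

lemma drg: "distance_regular E 3 (\<lambda>i. if i = 0 then k else if i = 1 then b else 1)
                          (\<lambda>i. if i = 1 then 1 else if i = 2 then b else k)"
  using tg unfolding taylor_graph_def by blast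

lemma sym: "E u v \<Longrightarrow> E v u" using drg unfolding distance_regular_def simple_graph_def by blast
lemma irr: "\<not> E u u" using drg unfolding distance_regular_def simple_graph_def by blast
lemma conn: "\<exists>n. (E ^^ n) u v" using drg unfolding distance_regular_def connected_graph_def by blast
lemma le3: "gdist E u v \<le> 3" using drg unfolding distance_regular_def by blast
lemma ex3: "\<exists>u v. gdist E u v = 3" using drg unfolding distance_regular_def by blast
lemma cntA: "gdist E u v = i \<Longrightarrow> card {z. E v z \<and> gdist E u z = i + 1} =
   (if i < 3 then (if i = 0 then k else if i = 1 then b else 1) else 0)"
  using drg unfolding distance_regular_def by blast
lemma cntB: "gdist E u v = i \<Longrightarrow> card {z. E v z \<and> gdist E u z + 1 = i} =
   (if 0 < i then (if i = 1 then 1 else if i = 2 then b else k) else 0)"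
  using drg unfolding distance_regular_def by blast

lemma walk: "(E ^^ gdist E u v) u v"
  unfolding gdist_def using conn by (rule LeastI_ex)
lemma least: "(E ^^ n) u v \<Longrightarrow> gdist E u v \<le> n"
  unfolding gdist_def by (rule Least_le)
lemma d0: "gdist E u v = 0 \<longleftrightarrow> u = v"
proof
  assume "gdist E u v = 0" then show "u = v" using walk[of u v] by simp
next
  assume "u = v" then show "gdist E u v = 0" using least[of 0 u v] by simp
qed
lemma tri: "E v w \<Longrightarrow> gdist E u w \<le> gdist E u v + 1"
  using least[OF relpowp_Suc_I[OF walk[of u v]]] by simp
lemma revwalk: "(E ^^ n) u v \<Longrightarrow> (E ^^ n) v u"
proof (induction n arbitrary: v)
  case 0 then show ?case by simp
next
  case (Suc n)
  from Suc.prems obtain w where "(E ^^ n) u w" "E w v" by (rule relpowp_Suc_E)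
  then show ?case using Suc.IH relpowp_Suc_I2 sym by metis
qed
lemma dsym: "gdist E u v = gdist E v u"
  using least[OF revwalk[OF walk[of u v]]] least[OF revwalk[OF walk[of v u]]] by simp
lemma d1: "gdist E u v = 1 \<longleftrightarrow> E u v"
proof
  assume "gdist E u v = 1" then show "E u v" using walk[of u v] by auto
next
  assume e: "E u v"
  then have "gdist E u v \<le> 1" using least[of 1 u v] by auto
  moreover have "u \<noteq> v" using e irr by blast
  ultimately show "gdist E u v = 1" using d0 by (metis le_antisym less_one not_le)
qed
lemma tri2: "E v w \<Longrightarrow> gdist E u v \<le> gdist E u w + 1"
  using tri sym by blast
lemma pred: "gdist E u v = Suc n \<Longrightarrow> \<exists>w. E w v \<and> gdist E u w = n"
proof -
  assume h: "gdist E u v = Suc n"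
  from walk[of u v] h obtain w where w: "(E ^^ n) u w" "E w v" by (metis relpowp_Suc_E)
  have "gdist E u w \<le> n" using least[OF w(1)] .
  moreover have "gdist E u v \<le> gdist E u w + 1" using tri[OF w(2)] .
  ultimately have "gdist E u w = n" using h by linarith
  then show ?thesis using w by blast
qed
lemma deg: "card {z. E v z} = k"
proof -
  have "{z. E v z} = {z. E v z \<and> gdist E v z = 0 + 1}" using d1 by auto
  then show ?thesis using cntA[of v v 0] d0 by simp
qed
lemma nonempty: "card S \<noteq> 0 \<Longrightarrow> \<exists>z. z \<in> S" by (metis card.empty ex_in_conv)

lemma b_pos: "b \<noteq> 0"
proof -
  obtain p q where "gdist E p q = 3" using ex3 by blast
  then have "gdist E p q = Suc 2" by simp
  then obtain w where w: "E w q" "gdist E p w = 2" using pred by blast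
  then have "gdist E p w = Suc 1" by simp
  then obtain w' where w': "E w' w" "gdist E p w' = 1" using pred by blast
  have "w' \<in> {z. E w z \<and> gdist E p z + 1 = 2}" using w' sym by auto
  then have "{z. E w z \<and> gdist E p z + 1 = 2} \<noteq> {}" by blast
  then have "card {z. E w z \<and> gdist E p z + 1 = 2} \<noteq> 0" by simp
  moreover have "card {z. E w z \<and> gdist E p z + 1 = 2} = b" using cntB[OF w(2)] by simp
  ultimately show ?thesis by metis
qed

lemma c3all: assumes "gdist E p q = 3" "E q z" shows "gdist E p z = 2"
proof -
  have c: "card {z. E q z \<and> gdist E p z + 1 = 3} = card {z. E q z}"
    using cntB[OF assms(1)] deg by simp
  have "{z. E q z \<and> gdist E p z + 1 = 3} = {z. E q z}"
    by (rule card_subset_eq[OF _ _ c]) auto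
  then show ?thesis using assms(2) by auto
qed

lemma anti_adj: assumes q: "gdist E p q = 3" and t: "gdist E p t = 2" shows "E q t"
proof -
  have "gdist E p t = Suc 1" using t by simp
  then obtain y where y: "E y t" "gdist E p y = 1" using pred by blast
  have py: "E p y" using y(2) d1 by blast
  have qp: "gdist E q p = 3" using q dsym by simp
  have qy: "gdist E q y = 2" using c3all[OF qp py] .
  define A where "A = {z. E y z \<and> gdist E q z + 1 = 2}"
  define B where "B = {z. E y z \<and> gdist E p z = 2}"
  have cA: "card A = b" unfolding A_def using cntB[OF qy] by simp
  have cB: "card B = b" unfolding B_def using cntA[OF y(2)] by (simp only: one_add_one) simp
  have AB: "A \<subseteq> B"
  proof
    fix z assume "z \<in> A"
    then have "E y z" "gdist E q z = 1" unfolding A_def by auto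
    then show "z \<in> B" unfolding B_def using c3all[OF q] d1 by blast
  qed
  have "A = B" by (rule card_subset_eq) (use AB cA cB in auto)
  moreover have "t \<in> B" unfolding B_def using y(1) t sym by blast
  ultimately have "gdist E q t + 1 = 2" unfolding A_def by blast
  then show ?thesis using d1 by simp
qed

lemma anti_uniq: assumes "gdist E p q1 = 3" "gdist E p q2 = 3" shows "q1 = q2"
proof -
  have "gdist E p q1 = Suc 2" using assms by simp
  then obtain t where t: "E t q1" "gdist E p t = 2" using pred by blast
  have "card {z. E t z \<and> gdist E p z = 2 + 1} = 1" using cntA[OF t(2)] by simp
  then obtain r where r: "{z. E t z \<and> gdist E p z = 2 + 1} = {r}" by (rule card_1_singletonE)
  have "E t q2" using anti_adj[OF assms(2) t(2)] sym by blast
  then have "q1 \<in> {r}" "q2 \<in> {r}" using t assms unfolding r[symmetric] by auto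
  then show ?thesis by simp
qed

lemma com1: assumes "E y z" shows "card {s. E y s \<and> E s z} = k - 1 - b"
proof -
  define X0 where "X0 = {s. E z s \<and> gdist E y s = 0}"
  define X1 where "X1 = {s. E z s \<and> gdist E y s = 1}"
  define X2 where "X2 = {s. E z s \<and> gdist E y s = 2}"
  have yz: "gdist E y z = 1" using assms d1 by blast
  have "{s. E z s} = X0 \<union> X1 \<union> X2"
  proof -
    have "E z s \<Longrightarrow> gdist E y s = 0 \<or> gdist E y s = 1 \<or> gdist E y s = 2" for s
    proof -
      assume "E z s"
      then have "gdist E y s \<le> 2" using tri[of z s y] yz by simp
      then show ?thesis by arith
    qed
    then show ?thesis unfolding X0_def X1_def X2_def by blast
  qed
  then have "k = card (X0 \<union> X1 \<union> X2)" using deg[of z] by metis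
  also have "\<dots> = card (X0 \<union> X1) + card X2"
    by (rule card_Un_disjoint) (auto simp: X0_def X1_def X2_def)
  also have "card (X0 \<union> X1) = card X0 + card X1"
    by (rule card_Un_disjoint) (auto simp: X0_def X1_def X2_def)
  finally have k: "k = card X0 + card X1 + card X2" .
  have "card X0 = 1" unfolding X0_def using cntB[OF yz] by simp
  moreover have "card X2 = b" unfolding X2_def using cntA[OF yz] by (simp only: one_add_one) simp
  moreover have "{s. E y s \<and> E s z} = X1" unfolding X1_def using d1 sym by blast
  ultimately show ?thesis using k by simp
qed

lemma com2: assumes "gdist E y z = 2" shows "card {s. E y s \<and> E s z} = b"
proof -
  have "{s. E y s \<and> E s z} = {s. E z s \<and> gdist E y s + 1 = 2}" using d1 sym by auto
  then show ?thesis using cntB[OF assms] by simp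
qed

lemma com3: assumes "gdist E y z = 3" shows "card {s. E y s \<and> E s z} = 0"
proof -
  have "{s. E y s \<and> E s z} = {}"
  proof (rule ccontr)
    assume "{s. E y s \<and> E s z} \<noteq> {}"
    then obtain s where "E y s" "E s z" by blast
    then have "gdist E y s = 1" "E s z" using d1 by blast+
    then have "gdist E y z \<le> 2" using tri[of s z y] by simp
    then show False using assms by simp
  qed
  then show ?thesis by simp
qed

end

theorem lemma7p2:
  fixes E :: "'a::finite \<Rightarrow> 'a \<Rightarrow> bool" and k b :: nat and x :: 'a and W :: "'a cvec set"
  assumes "taylor_graph E k b"
    and "irreducible_T_module E x W"
  shows "endpoint E x W = 0 \<or> endpoint E x W = 1"
proof -
  interpret tay E k b using assms(1) by unfold_locales
  have TM: "T_module E x W" and nz: "W \<noteq> {\<lambda>_. 0}"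
    using assms(2) unfolding irreducible_T_module_def by auto
  have zero: "(\<lambda>_. 0) \<in> W" using TM unfolding T_module_def csubspace_fun_def by blast
  have clA: "mvec (adj_mat E) v \<in> W" if "v \<in> W" for v
    using TM terwilliger.gen_A that unfolding T_module_def by blast
  have clD: "mvec (dual_idem E x i) v \<in> W" if "v \<in> W" "i \<le> 3" for v i
    using TM terwilliger.gen_E that unfolding T_module_def by blast
  define P where "P i = (\<exists>v\<in>W. mvec (dual_idem E x i) v \<noteq> (\<lambda>_. 0))" for i
  have ep: "endpoint E x W = (LEAST i. P i)" unfolding endpoint_def P_def by simp
  show ?thesis
  proof (rule ccontr)
    assume neg: "\<not> ?thesis"
    have nP0: "\<not> P 0"
    proof
      assume "P 0" then have "(LEAST i. P i) = 0" by (rule Least_eq_0)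
      then show False using neg ep by simp
    qed
    have nP1: "\<not> P 1"
    proof
      assume "P 1" then have "(LEAST i. P i) \<le> 1" by (rule Least_le)
      then show False using neg ep by linarith
    qed
    have H: "v y = 0" if "v \<in> W" "gdist E x y \<le> 1" for v y
    proof -
      have "gdist E x y = 0 \<or> gdist E x y = 1" using that(2) by arith
      then obtain i where i: "\<not> P i" "gdist E x y = i" using nP0 nP1 by blast
      then have "mvec (dual_idem E x i) v = (\<lambda>_. 0)" using that(1) unfolding P_def by blast
      then have "mvec (dual_idem E x i) v y = 0" by simp
      then show ?thesis using i(2) by (simp add: mvec_dual)
    qed
    have H3: "v q = 0" if v: "v \<in> W" and q: "gdist E x q = 3" for v q
    proof -
      define u1 where "u1 = mvec (adj_mat E) (mvec (dual_idem E x 3) v)"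
      define u2 where "u2 = mvec (dual_idem E x 2) u1"
      have u2W: "u2 \<in> W" unfolding u2_def u1_def using clA clD v by simp
      have u2v: "u2 t = (if gdist E x t = 2 then v q else 0)" for t
      proof (cases "gdist E x t = 2")
        case True
        have "u1 t = (\<Sum>s\<in>UNIV. if s = q then v q else 0)"
          unfolding u1_def mvec_adj mvec_dual
        proof (rule sum.cong)
          fix s
          have "E t q" using anti_adj[OF q True] sym by blast
          moreover have "E t s \<Longrightarrow> gdist E x s = 3 \<Longrightarrow> s = q" using anti_uniq q by blast
          ultimately show "(if E t s then if gdist E x s = 3 then v s else 0 else 0) = (if s = q then v q else 0)"
            using q by (cases "s = q") auto
        qed simp
        then show ?thesis unfolding u2_def mvec_dual using True by simp
      next
        case False
        then show ?thesis unfolding u2_def mvec_dual by simp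
      qed
      obtain y where y: "E x y" using nonempty[of "{z. E x z}"] deg bk by auto
      have gy: "gdist E x y = 1" using y d1 by blast
      have "mvec (adj_mat E) u2 y = 0" using H[OF clA[OF u2W]] gy by simp
      moreover have "mvec (adj_mat E) u2 y = (\<Sum>t\<in>UNIV. if E y t \<and> gdist E x t = 2 then v q else 0)"
        unfolding mvec_adj u2v by (rule sum.cong) auto
      moreover have "card {t. E y t \<and> gdist E x t = 2} = b"
        using cntA[OF gy] by (simp only: one_add_one) simp
      ultimately have "of_nat b * v q = 0" using sum_const_if by metis
      then show ?thesis using b_pos by simp
    qed
    have H2: "v y = 0" if "v \<in> W" "gdist E x y \<noteq> 2" for v y
    proof -
      have "gdist E x y \<le> 1 \<or> gdist E x y = 3" using le3[of x y] that(2) by arith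
      then show ?thesis using H H3 that(1) by blast
    qed
    have allz: "v z0 = 0" if v: "v \<in> W" for v z0
    proof (cases "gdist E x z0 = 2")
      case False then show ?thesis using H2 v by blast
    next
      case g: True
      have gz: "gdist E z0 x = 2" using g dsym by simp
      have "card {s. E x s \<and> gdist E z0 s = 2 + 1} = 1" using cntA[OF gz] by simp
      then have "card {s. E x s \<and> gdist E z0 s = 2 + 1} \<noteq> 0" by simp
      from nonempty[OF this] obtain y where "y \<in> {s. E x s \<and> gdist E z0 s = 2 + 1}" by blast
      then have y: "E x y" "gdist E z0 y = 3" by simp_all
      have yz: "gdist E y z0 = 3" using y dsym by simp
      have gy: "gdist E x y = 1" using y d1 by blast
      have "card {s. E z0 s \<and> gdist E x s = 2 + 1} = 1" using cntA[OF g] by simp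
      then have "card {s. E z0 s \<and> gdist E x s = 2 + 1} \<noteq> 0" by simp
      from nonempty[OF this] obtain q where "q \<in> {s. E z0 s \<and> gdist E x s = 2 + 1}" by blast
      then have q: "gdist E x q = 3" by simp
      define S where "S j = (\<Sum>z\<in>UNIV. if gdist E y z = j then v z else 0)" for j
      have AvW: "mvec (adj_mat E) v \<in> W" using clA v by blast
      have tot: "(\<Sum>z\<in>UNIV. v z) = 0"
      proof -
        have "mvec (adj_mat E) v q = 0" using H3[OF AvW q] .
        moreover have "mvec (adj_mat E) v q = (\<Sum>z\<in>UNIV. v z)"
          unfolding mvec_adj
        proof (rule sum.cong)
          fix s
          have "\<not> E q s \<Longrightarrow> v s = 0"
          proof -
            assume "\<not> E q s"
            then have "gdist E x s \<noteq> 2" using anti_adj[OF q] by blast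
            then show "v s = 0" using H2 v by blast
          qed
          then show "(if E q s then v s else 0) = v s" by auto
        qed simp
        ultimately show ?thesis by simp
      qed
      have split: "(\<Sum>z\<in>UNIV. v z) = S 0 + S 1 + S 2 + S 3"
      proof -
        have pw: "v z = (if gdist E y z = 0 then v z else 0) + (if gdist E y z = 1 then v z else 0)
            + (if gdist E y z = 2 then v z else 0) + (if gdist E y z = 3 then v z else 0)" for z
        proof -
          have "gdist E y z = 0 \<or> gdist E y z = 1 \<or> gdist E y z = 2 \<or> gdist E y z = 3"
            using le3[of y z] by arith
          then show ?thesis by auto
        qed
        show ?thesis unfolding S_def sum.distrib[symmetric] by (rule sum.cong[OF refl pw])
      qed
      have S0: "S 0 = 0"
      proof -
        have "(if gdist E y z = 0 then v z else 0) = 0" for z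
          using d0[of y z] H[OF v, of y] gy by auto
        then show ?thesis unfolding S_def by simp
      qed
      have S1: "S 1 = 0"
      proof -
        have "mvec (adj_mat E) v y = 0" using H[OF AvW] gy by simp
        moreover have "mvec (adj_mat E) v y = S 1" unfolding mvec_adj S_def
          by (rule sum.cong[OF refl]) (simp only: d1)
        ultimately show ?thesis by simp
      qed
      have S2: "S 2 = 0"
      proof -
        have AAvW: "mvec (adj_mat E) (mvec (adj_mat E) v) \<in> W" using clA AvW by blast
        have "mvec (adj_mat E) (mvec (adj_mat E) v) y = 0" using H[OF AAvW] gy by simp
        moreover have "mvec (adj_mat E) (mvec (adj_mat E) v) y
            = (\<Sum>s\<in>UNIV. \<Sum>z\<in>UNIV. if E y s \<and> E s z then v z else 0)"
          unfolding mvec_adj by (rule sum.cong) (auto simp: sum.neutral)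
        moreover have "\<dots> = (\<Sum>z\<in>UNIV. \<Sum>s\<in>UNIV. if E y s \<and> E s z then v z else 0)"
          by (rule sum.swap)
        moreover have "\<dots> = (\<Sum>z\<in>UNIV. of_nat (k - 1 - b) * (if gdist E y z = 1 then v z else 0)
                               + of_nat b * (if gdist E y z = 2 then v z else 0))"
        proof (rule sum.cong[OF refl])
          fix z
          have c: "(\<Sum>s\<in>UNIV. if E y s \<and> E s z then v z else 0) = of_nat (card {s. E y s \<and> E s z}) * v z"
            by (rule sum_const_if)
          show "(\<Sum>s\<in>UNIV. if E y s \<and> E s z then v z else 0) = of_nat (k - 1 - b) * (if gdist E y z = 1 then v z else 0)
                               + of_nat b * (if gdist E y z = 2 then v z else 0)"
          proof (cases "v z = 0")
            case True then show ?thesis unfolding c by simp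
          next
            case False
            then have "gdist E x z = 2" using H2 v by blast
            then have "z \<noteq> y" using gy by auto
            then have "gdist E y z \<noteq> 0" using d0[of y z] by auto
            then have "gdist E y z = 1 \<or> gdist E y z = 2 \<or> gdist E y z = 3"
              using le3[of y z] by arith
            moreover have "gdist E y z = 1 \<Longrightarrow> E y z" using d1 by blast
            ultimately show ?thesis unfolding c using com1 com2 com3 by auto
          qed
        qed
        moreover have "\<dots> = of_nat (k - 1 - b) * S 1 + of_nat b * S 2"
          unfolding S_def by (simp add: sum.distrib sum_distrib_left)
        ultimately have "of_nat b * S 2 = 0" using S1 by simp
        then show ?thesis using b_pos by simp
      qed
      have S3: "S 3 = v z0"
      proof -
        have "S 3 = (\<Sum>z\<in>UNIV. if z = z0 then v z0 else 0)" unfolding S_def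
        proof (rule sum.cong[OF refl])
          fix z
          have "gdist E y z = 3 \<Longrightarrow> z = z0" using anti_uniq[OF _ yz] by blast
          then show "(if gdist E y z = 3 then v z else 0) = (if z = z0 then v z0 else 0)"
            using yz by (cases "z = z0") auto
        qed
        then show ?thesis by simp
      qed
      have "S 0 + S 1 + S 2 + S 3 = 0" using tot split by simp
      then show ?thesis unfolding S0 S1 S2 S3 by simp
    qed
    have "W = {\<lambda>_. 0}" using allz zero by auto
    then show False using nz by simp
  qed
qed

end
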